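(* Let $\{\rho_\theta : \theta=(\theta^1,\theta^2)\in\Theta\}$ be a two-parameter qubit model satisfying the regularity conditions, let $\theta\in\Theta$, and let $W$ be a $2\times 2$ real symmetric positive definite weight matrix. Then the Holevo bound is \[ C_\theta^H[W]= \begin{cases} C_\theta^R[W] & \text{if } C_\theta^R[W]\ge \tfrac{1}{2}\big(C_\theta^Z[W]+C_\theta^S[W]\big),\\[1ex] C_\theta^R[W]+S_\theta[W] & \text{otherwise}, \end{cases} \] where the nonnegative quantity $S_\theta[W]$ is \[ S_\theta[W]:=\frac{\Big[\tfrac{1}{2}\big(C_\theta^Z[W]+C_\theta^S[W]\big)-C_\theta^R[W]\Big]^2}{C_\theta^Z[W]-C_\theta^R[W]}. \]
   Context: A two-parameter qubit model is a family of density matrices $\rho_\theta$ on $\mathbb{C}^2$ indexed by $\theta=(\theta^1,\theta^2)$ in an open set $\Theta\subset\mathbb{R}^2$. Regularity conditions: each $\rho_\theta$ is strictly positive (full rank); $\theta\mapsto\rho_\theta$ is sufficiently smooth; the partial derivatives $\partial_1\rho_\theta,\partial_2\rho_\theta$ ($\partial_i=\partial/\partial\theta^i$) are linearly independent. The SLD operators $L_{\theta,i}$ are the hermitian solutions of $\partial_i\rho_\theta=\tfrac12(\rho_\theta L_{\theta,i}+L_{\theta,i}\rho_\theta)$; the RLD operators $\tilde L_{\theta,i}$ are defined by $\partial_i\rho_\theta=\rho_\theta\tilde L_{\theta,i}$. The SLD Fisher information matrix is $G_\theta=[g_{\theta,ij}]$ with $g_{\theta,ij}=\mathrm{tr}\big(\rho_\theta\tfrac12(L_{\theta,i}L_{\theta,j}+L_{\theta,j}L_{\theta,i})\big)$;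 the RLD Fisher information matrix is $\tilde G_\theta=[\tilde g_{\theta,ij}]$ with $\tilde g_{\theta,ij}=\mathrm{tr}(\rho_\theta\tilde L_{\theta,j}\tilde L_{\theta,i}^* )$. The SLD dual operators are $L_\theta^i=\sum_j (G_\theta^{-1})^{ji}L_{\theta,j}$, and $Z_\theta=[z_\theta^{ij}]_{i,j\in\{1,2\}}$ with $z_\theta^{ij}=\mathrm{tr}(\rho_\theta L_\theta^jL_\theta^i)$ (a hermitian matrix). $\mathrm{Re}\,\tilde G_\theta^{-1}$, $\mathrm{Im}\,\tilde G_\theta^{-1}$ denote the entrywise real/imaginary parts of the inverse matrix $\tilde G_\theta^{-1}$. For a diagonalizable matrix $X=T\,\mathrm{diag}(\lambda_1,\dots,\lambda_m)T^{-1}$, $\mathrm{TrAbs}\,X:=\sum_j|\lambda_j|$. The three bounds are $C_\theta^S[W]=\mathrm{Tr}(WG_\theta^{-1})$, $C_\theta^R[W]=\mathrm{Tr}(W\,\mathrm{Re}\,\tilde G_\theta^{-1})+\mathrm{TrAbs}(W\,\mathrm{Im}\,\tilde G_\theta^{-1})$, and $C_\theta^Z[W]=\mathrm{Tr}(W\,\mathrm{Re}\,Z_\theta)+\mathrm{TrAbs}(W\,\mathrm{Im}\,Z_\theta)$. The Holevo bound is $C_\theta^H[W]=\min_{\vec X\in\mathcal X_\theta}h_\theta[\vec X|W]$, where $\mathcal X_\theta$ is the set of pairs $\vec X=(X^1,X^2)$ of hermitian operators with $\mathrm{tr}(\rho_\theta X^i)=0$ and $\mathrm{tr}(\partial_i\rho_\theta\,X^j)=\delta^j_i$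 for all $i,j$, and $h_\theta[\vec X|W]=\mathrm{Tr}(W\,\mathrm{Re}\,Z_\theta[\vec X])+\mathrm{TrAbs}(W\,\mathrm{Im}\,Z_\theta[\vec X])$ with $Z_\theta[\vec X]=[\mathrm{tr}(\rho_\theta X^jX^i)]_{i,j}$. *)

theory Defs
  imports "HOL-Analysis.Analysis"
begin

type_synonym cmat = "complex^2^2"
type_synonym rmat = "real^2^2"

definition cadj :: "complex^'n^'n \<Rightarrow> complex^'n^'n" where
  "cadj A = (\<chi> i j. cnj (A $ j $ i))"

definition hermitian :: "complex^'n^'n \<Rightarrow> bool" where
  "hermitian A \<longleftrightarrow> cadj A = A"

definition strictly_positive :: "complex^'n^'n \<Rightarrow> bool" where
  "strictly_positive A \<longleftrightarrow> hermitian A \<and>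
     (\<forall>v::complex^'n. v \<noteq> 0 \<longrightarrow> 0 < Re (\<Sum>i\<in>UNIV. cnj (v $ i) * (A *v v) $ i))"

definition ReM :: "complex^'n^'m \<Rightarrow> real^'n^'m" where
  "ReM A = (\<chi> i j. Re (A $ i $ j))"
definition ImM :: "complex^'n^'m \<Rightarrow> real^'n^'m" where
  "ImM A = (\<chi> i j. Im (A $ i $ j))"
definition ofRM :: "real^'n^'m \<Rightarrow> complex^'n^'m" where
  "ofRM A = (\<chi> i j. complex_of_real (A $ i $ j))"

definition diag_mat :: "complex^'n \<Rightarrow> complex^'n^'n" where
  "diag_mat d = (\<chi> i j. if i = j then d $ i else 0)"

definition TrAbs :: "complex^'n^'n \<Rightarrow> real" where
  "TrAbs X = (THE s. \<exists>(T::complex^'n^'n) d. invertible T \<and> X = T ** diag_mat d ** matrix_inv T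
                         \<and> s = (\<Sum>j\<in>UNIV. cmod (d $ j)))"

definition pder :: "(real^2 \<Rightarrow> cmat) \<Rightarrow> real^2 \<Rightarrow> 2 \<Rightarrow> cmat" where
  "pder rho \<theta> i = frechet_derivative rho (at \<theta>) (axis i 1)"

definition SLD :: "(real^2 \<Rightarrow> cmat) \<Rightarrow> real^2 \<Rightarrow> 2 \<Rightarrow> cmat" where
  "SLD rho \<theta> i = (THE L. hermitian L \<and>
      pder rho \<theta> i = (1/2::real) *\<^sub>R (rho \<theta> ** L + L ** rho \<theta>))"

definition RLD :: "(real^2 \<Rightarrow> cmat) \<Rightarrow> real^2 \<Rightarrow> 2 \<Rightarrow> cmat" where
  "RLD rho \<theta> i = (THE L. pder rho \<theta> i = rho \<theta> ** L)"

text \<open>SLD Fisher information (its entries are real; Re is the identity on them).\<close>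
definition SLD_Fisher :: "(real^2 \<Rightarrow> cmat) \<Rightarrow> real^2 \<Rightarrow> rmat" where
  "SLD_Fisher rho \<theta> = (\<chi> i j. Re (trace (rho \<theta> **
      ((1/2::real) *\<^sub>R (SLD rho \<theta> i ** SLD rho \<theta> j + SLD rho \<theta> j ** SLD rho \<theta> i)))))"

definition RLD_Fisher :: "(real^2 \<Rightarrow> cmat) \<Rightarrow> real^2 \<Rightarrow> cmat" where
  "RLD_Fisher rho \<theta> = (\<chi> i j. trace (rho \<theta> ** RLD rho \<theta> j ** cadj (RLD rho \<theta> i)))"

definition SLD_dual :: "(real^2 \<Rightarrow> cmat) \<Rightarrow> real^2 \<Rightarrow> 2 \<Rightarrow> cmat" where
  "SLD_dual rho \<theta> i = (\<Sum>j\<in>UNIV. matrix_inv (SLD_Fisher rho \<theta>) $ j $ i *\<^sub>R SLD rho \<theta> j)"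

definition Zmat :: "(real^2 \<Rightarrow> cmat) \<Rightarrow> real^2 \<Rightarrow> cmat" where
  "Zmat rho \<theta> = (\<chi> i j. trace (rho \<theta> ** SLD_dual rho \<theta> j ** SLD_dual rho \<theta> i))"

definition CS :: "(real^2 \<Rightarrow> cmat) \<Rightarrow> real^2 \<Rightarrow> rmat \<Rightarrow> real" where
  "CS rho \<theta> W = trace (W ** matrix_inv (SLD_Fisher rho \<theta>))"

definition CR :: "(real^2 \<Rightarrow> cmat) \<Rightarrow> real^2 \<Rightarrow> rmat \<Rightarrow> real" where
  "CR rho \<theta> W = trace (W ** ReM (matrix_inv (RLD_Fisher rho \<theta>)))
      + TrAbs (ofRM (W ** ImM (matrix_inv (RLD_Fisher rho \<theta>))))"

definition CZ :: "(real^2 \<Rightarrow> cmat) \<Rightarrow> real^2 \<Rightarrow> rmat \<Rightarrow> real" where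
  "CZ rho \<theta> W = trace (W ** ReM (Zmat rho \<theta>)) + TrAbs (ofRM (W ** ImM (Zmat rho \<theta>)))"

definition locally_unbiased :: "(real^2 \<Rightarrow> cmat) \<Rightarrow> real^2 \<Rightarrow> (2 \<Rightarrow> cmat) set" where
  "locally_unbiased rho \<theta> = {X. (\<forall>i. hermitian (X i)) \<and> (\<forall>i. trace (rho \<theta> ** X i) = 0)
      \<and> (\<forall>i j. trace (pder rho \<theta> i ** X j) = (if i = j then 1 else 0))}"

definition ZmatX :: "(real^2 \<Rightarrow> cmat) \<Rightarrow> real^2 \<Rightarrow> (2 \<Rightarrow> cmat) \<Rightarrow> cmat" where
  "ZmatX rho \<theta> X = (\<chi> i j. trace (rho \<theta> ** X j ** X i))"

definition hfun :: "(real^2 \<Rightarrow> cmat) \<Rightarrow> real^2 \<Rightarrow> (2 \<Rightarrow> cmat) \<Rightarrow> rmat \<Rightarrow> real" where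
  "hfun rho \<theta> X W = trace (W ** ReM (ZmatX rho \<theta> X)) + TrAbs (ofRM (W ** ImM (ZmatX rho \<theta> X)))"

definition CH :: "(real^2 \<Rightarrow> cmat) \<Rightarrow> real^2 \<Rightarrow> rmat \<Rightarrow> real" where
  "CH rho \<theta> W = Inf ((\<lambda>X. hfun rho \<theta> X W) ` locally_unbiased rho \<theta>)"

definition Sterm :: "(real^2 \<Rightarrow> cmat) \<Rightarrow> real^2 \<Rightarrow> rmat \<Rightarrow> real" where
  "Sterm rho \<theta> W = ((CZ rho \<theta> W + CS rho \<theta> W) / 2 - CR rho \<theta> W)\<^sup>2 / (CZ rho \<theta> W - CR rho \<theta> W)"

end

theory Submission
  imports Defs
begin

definition mk :: "'a \<Rightarrow> 'a \<Rightarrow> 'a \<Rightarrow> 'a \<Rightarrow> 'a^2^2" where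
  "mk a b c d = (\<chi> i j. if i = 1 then (if j = 1 then a else b) else (if j = 1 then c else d))"

lemma mk_nth[simp]: "mk a b c d $ 1 $ 1 = a" "mk a b c d $ 1 $ 2 = b" "mk a b c d $ 2 $ 1 = c" "mk a b c d $ 2 $ 2 = d"
  by (simp_all add: mk_def)

lemma mk_eta: "M = mk (M$1$1) (M$1$2) (M$2$1) (M$2$2)"
  by (simp add: vec_eq_iff forall_2)

lemma mk_eq_iff: "mk a b c d = mk a' b' c' d' \<longleftrightarrow> a = a' \<and> b = b' \<and> c = c' \<and> d = d'"
  by (metis mk_nth)

lemma mk_mult: "mk (a::'a::comm_ring_1) b c d ** mk e f g h = mk (a*e+b*g) (a*f+b*h) (c*e+d*g) (c*f+d*h)"
  by (simp add: vec_eq_iff forall_2 matrix_matrix_mult_def sum_2)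

lemma mk_trace: "trace (mk (a::'a::comm_ring_1) b c d) = a + d"
  by (simp add: trace_def sum_2)

lemma matrix_inv_eq: fixes A :: "'a::comm_ring_1^'n^'n"
  assumes "A ** C = mat 1" "C ** A = mat 1" shows "matrix_inv A = C"
proof -
  have ex: "\<exists>A'. A ** A' = mat 1 \<and> A' ** A = mat 1" using assms by blast
  then have "A ** matrix_inv A = mat 1 \<and> matrix_inv A ** A = mat 1" unfolding matrix_inv_def by (rule someI_ex)
  then show ?thesis by (metis assms matrix_mul_assoc matrix_mul_lid matrix_mul_rid)
qed

lemma mk_add: "mk a b c d + mk e f g h = mk (a+e) (b+f) (c+g) (d+h)"
  by (simp add: vec_eq_iff forall_2)
lemma mk_diff: "mk a b c d - mk e f g h = mk (a-e) (b-f) (c-g) (d-h)"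
  by (simp add: vec_eq_iff forall_2)
lemma mk_scaleR: "r *\<^sub>R mk a b c d = mk (r*\<^sub>Ra) (r*\<^sub>Rb) (r*\<^sub>Rc) (r*\<^sub>Rd)"
  by (simp add: vec_eq_iff forall_2)
lemma mk_zero: "(0::'a::zero^2^2) = mk 0 0 0 0"
  by (simp add: vec_eq_iff forall_2)
lemma mk_one: "(mat 1::'a::{zero,one}^2^2) = mk 1 0 0 1"
  by (simp add: vec_eq_iff forall_2 mat_def)
lemma mk_det: "det (mk (a::'a::comm_ring_1) b c d) = a*d - b*c"
  by (simp add: det_2)
lemma mk_cadj: "cadj (mk a b c d) = mk (cnj a) (cnj c) (cnj b) (cnj d)"
  by (simp add: vec_eq_iff forall_2 cadj_def)
lemma mk_transpose: "transpose (mk a b c d) = mk a c b d"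
  by (simp add: vec_eq_iff forall_2 transpose_def)
lemma mk_ReM: "ReM (mk a b c d) = mk (Re a) (Re b) (Re c) (Re d)"
  by (simp add: vec_eq_iff forall_2 ReM_def)
lemma mk_ImM: "ImM (mk a b c d) = mk (Im a) (Im b) (Im c) (Im d)"
  by (simp add: vec_eq_iff forall_2 ImM_def)
lemma mk_ofRM: "ofRM (mk a b c d) = mk (of_real a) (of_real b) (of_real c) (of_real d)"
  by (simp add: vec_eq_iff forall_2 ofRM_def)
lemma mk_inv: fixes a :: "'a::field"
  assumes "x \<noteq> 0" "a*d - b*c = x"
  shows "matrix_inv (mk a b c d) = mk (d/x) (-b/x) (-c/x) (a/x)"
  apply (rule matrix_inv_eq)
  using assms by (simp_all add: mk_mult mk_one mk_eq_iff field_simps)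
lemma mk_mulv: "mk (a::'a::comm_ring_1) b c d *v v = vector [a * v$1 + b * v$2, c * v$1 + d * v$2]"
  by (simp add: vec_eq_iff forall_2 matrix_vector_mult_def sum_2 vector_def)

definition B :: "real \<Rightarrow> real^3 \<Rightarrow> complex^2^2" where
  "B a x = mk (complex_of_real (a + x$3)) (Complex (x$1) (- x$2)) (Complex (x$1) (x$2)) (complex_of_real (a - x$3))"

lemma B_add: "B a x + B b y = B (a+b) (x+y)"
  by (simp add: B_def mk_add mk_eq_iff complex_eq_iff)
lemma B_scale: "c *\<^sub>R B a x = B (c*a) (c *\<^sub>R x)"
  by (simp add: B_def mk_scaleR mk_eq_iff complex_eq_iff algebra_simps)
lemma B_zero: "B 0 0 = 0"
  by (simp add: B_def mk_zero mk_eq_iff complex_eq_iff)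
lemma B_inj: "B a x = B b y \<longleftrightarrow> a = b \<and> x = y"
proof
  assume "B a x = B b y"
  then have "a + x$3 = b + y$3" "a - x$3 = b - y$3" "x$1 = y$1" "x$2 = y$2"
    by (auto simp: B_def mk_eq_iff complex_eq_iff)
  then show "a = b \<and> x = y" by (auto simp: vec_eq_iff forall_3)
qed auto
lemma B_sum2: fixes c :: "2 \<Rightarrow> real" shows "(\<Sum>j\<in>UNIV. c j *\<^sub>R B (a j) (x j)) = B (\<Sum>j\<in>UNIV. c j * a j) (\<Sum>j\<in>UNIV. c j *\<^sub>R x j)"
  by (simp add: sum_2 B_scale B_add)
lemma trace_B: "trace (B a x) = 2 * a"
  by (simp add: B_def mk_trace)
lemma cadj_B: "cadj (B a x) = B a x"
  by (simp add: B_def mk_cadj mk_eq_iff complex_eq_iff)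
lemma hermitian_B: "hermitian (B a x)"
  by (simp add: hermitian_def cadj_B)
lemma trace_BB: "trace (B a x ** B b y) = 2 * (a*b + x \<bullet> y)"
  by (simp add: B_def mk_mult mk_trace inner_vec_def sum_3 complex_eq_iff algebra_simps)
lemma trace_BBB: "trace (B a x ** B b y ** B c z) =
   Complex (2*((a*b + x \<bullet> y)*c + a*(y \<bullet> z) + b*(x \<bullet> z))) (2*((cross3 x y) \<bullet> z))"
  by (simp add: B_def mk_mult mk_trace inner_vec_def sum_3 cross3_def vector_def complex_eq_iff algebra_simps)
lemma BB_sym: "B a x ** B b y + B b y ** B a x = B (2*(a*b + x \<bullet> y)) (2 *\<^sub>R (a *\<^sub>R y + b *\<^sub>R x))"
  by (simp add: B_def mk_mult mk_add mk_eq_iff inner_vec_def sum_3 complex_eq_iff algebra_simps)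

lemma hermitian_ex_B: assumes "hermitian M" shows "\<exists>a x. M = B a x"
proof -
  have h: "cnj (M$1$1) = M$1$1" "cnj (M$2$2) = M$2$2" "cnj (M$1$2) = M$2$1"
    using assms by (auto simp: hermitian_def cadj_def vec_eq_iff forall_2)
  define a where "a = Re (M$1$1 + M$2$2) / 2"
  define x where "x = (vector [Re (M$2$1), Im (M$2$1), Re (M$1$1 - M$2$2)/2] :: real^3)"
  have "M = B a x"
    apply (subst mk_eta)
    using h by (simp add: B_def a_def x_def mk_eq_iff complex_eq_iff vector_def field_simps)
  then show ?thesis by blast
qed

lemma linear_cadj: "linear (cadj :: complex^2^2 \<Rightarrow> complex^2^2)"
  by (rule linearI) (simp_all add: cadj_def vec_eq_iff)

lemma linear_trace: "linear (trace :: complex^2^2 \<Rightarrow> complex)"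
  by (rule linearI) (simp_all add: trace_def sum.distrib scaleR_sum_right del: scaleR_conv_of_real)

lemma pder_props:
  fixes rho :: "real^2 \<Rightarrow> complex^2^2"
  assumes "open S" "\<theta> \<in> S" "\<forall>t\<in>S. hermitian (rho t) \<and> trace (rho t) = 1"
    and "rho differentiable (at \<theta>)"
  shows "hermitian (pder rho \<theta> i) \<and> trace (pder rho \<theta> i) = 0"
proof -
  let ?F = "frechet_derivative rho (at \<theta>)"
  have d: "(rho has_derivative ?F) (at \<theta>)" using assms(4) frechet_derivative_works by blast
  have bc: "bounded_linear (cadj :: complex^2^2 \<Rightarrow> complex^2^2)"
    using linear_cadj linear_conv_bounded_linear by blast
  have bt: "bounded_linear (trace :: complex^2^2 \<Rightarrow> complex)"
    using linear_trace linear_conv_bounded_linear by blast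
  have h1: "((\<lambda>t. cadj (rho t) - rho t) has_derivative (\<lambda>v. cadj (?F v) - ?F v)) (at \<theta>)"
    by (intro has_derivative_diff bounded_linear.has_derivative[OF bc] d)
  have h1': "((\<lambda>t. 0) has_derivative (\<lambda>v. cadj (?F v) - ?F v)) (at \<theta>)"
    apply (rule has_derivative_transform_within_open[OF h1 assms(1) assms(2)])
    using assms(3) by (simp add: hermitian_def)
  have "(\<lambda>v. cadj (?F v) - ?F v) = (\<lambda>v. 0)"
    using has_derivative_unique[OF h1' has_derivative_const] .
  then have "cadj (?F v) - ?F v = 0" for v by (rule fun_cong)
  then have H: "cadj (?F v) = ?F v" for v by (simp add: right_minus_eq)
  have h2: "((\<lambda>t. trace (rho t) - 1) has_derivative (\<lambda>v. trace (?F v) - 0)) (at \<theta>)"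
    by (intro has_derivative_diff bounded_linear.has_derivative[OF bt] d has_derivative_const)
  have h2': "((\<lambda>t. 0) has_derivative (\<lambda>v. trace (?F v) - 0)) (at \<theta>)"
    apply (rule has_derivative_transform_within_open[OF h2 assms(1) assms(2)])
    using assms(3) by simp
  have "(\<lambda>v. trace (?F v) - 0) = (\<lambda>v. 0)"
    using has_derivative_unique[OF h2' has_derivative_const] .
  then have "trace (?F v) - 0 = 0" for v by (rule fun_cong)
  then have T: "trace (?F v) = 0" for v by simp
  show ?thesis using H T by (simp add: pder_def hermitian_def)
qed

lemma pos_det: fixes p q :: real and w :: complex
  assumes "\<forall>v::complex^2. v \<noteq> 0 \<longrightarrow> 0 < Re (\<Sum>i\<in>UNIV. cnj (v $ i) * (mk (complex_of_real p) w (cnj w) (complex_of_real q) *v v) $ i)"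
  shows "p > 0" "p * q - ((Re w)^2 + (Im w)^2) > 0"
proof -
  have v1: "(vector [1, 0] :: complex^2) \<noteq> 0" by (simp add: vec_eq_iff forall_2 vector_def)
  from assms[rule_format, OF v1] show p: "p > 0"
    by (simp add: mk_mulv sum_2 vector_def)
  have v2: "(vector [w, - complex_of_real p] :: complex^2) \<noteq> 0" using p by (simp add: vec_eq_iff forall_2 vector_def)
  from assms[rule_format, OF v2] have "0 < p * (p*q - ((Re w)^2 + (Im w)^2))"
    by (simp add: mk_mulv sum_2 vector_def algebra_simps power2_eq_square)
  then show "p * q - ((Re w)^2 + (Im w)^2) > 0" using p by (simp add: zero_less_mult_iff)
qed

lemma invertible_inv: fixes A :: "'a::comm_ring_1^'n^'n" assumes "invertible A"
  shows "A ** matrix_inv A = mat 1" "matrix_inv A ** A = mat 1"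
proof -
  have "\<exists>A'. A ** A' = mat 1 \<and> A' ** A = mat 1" using assms invertible_def by blast
  then have "A ** matrix_inv A = mat 1 \<and> matrix_inv A ** A = mat 1" unfolding matrix_inv_def by (rule someI_ex)
  then show "A ** matrix_inv A = mat 1" "matrix_inv A ** A = mat 1" by auto
qed

lemma cadj_mult: "cadj ((A::complex^'n^'n) ** C) = cadj C ** cadj A"
  by (simp add: cadj_def matrix_matrix_mult_def vec_eq_iff mult.commute)

lemma B_mult_par: "B a (p *\<^sub>R x) ** B b (q *\<^sub>R x) = B (a*b + p*q*(x \<bullet> x)) ((a*q + b*p) *\<^sub>R x)"
  by (simp add: B_def mk_mult mk_eq_iff inner_vec_def sum_3 complex_eq_iff algebra_simps)

lemma B_one: "B 1 0 = mat 1"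
  by (simp add: B_def mk_one mk_eq_iff complex_eq_iff)

lemma diag_mk: "diag_mat d = mk (d$1) 0 0 (d$2)"
  by (simp add: diag_mat_def vec_eq_iff forall_2)

lemma TrAbs_unique:
  fixes X :: "complex^2^2"
  assumes "trace X = 0" "invertible (T::complex^2^2)" "X = T ** diag_mat (d::complex^2) ** matrix_inv T"
  shows "(\<Sum>j\<in>UNIV. cmod (d $ j)) = 2 * sqrt (cmod (det X))"
proof -
  note I = invertible_inv[OF assms(2)]
  have "trace X = trace (diag_mat d ** (matrix_inv T ** T))"
    using assms(3) by (metis matrix_mul_assoc trace_mul_sym)
  then have tr: "d$1 + d$2 = 0" using assms(1) I by (simp add: diag_mk mk_trace)
  have "det X = det T * det (diag_mat d) * det (matrix_inv T)"
    using assms(3) by (simp add: det_mul)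
  also have "\<dots> = det (diag_mat d) * det (T ** matrix_inv T)" by (simp add: det_mul)
  finally have dt: "det X = d$1 * d$2" using I by (simp add: diag_mk mk_det)
  have d2: "d$2 = - d$1" using tr by (simp add: eq_neg_iff_add_eq_0 add.commute)
  have "cmod (det X) = (cmod (d$1))^2" using dt d2 by (simp add: norm_mult power2_eq_square)
  then have "sqrt (cmod (det X)) = cmod (d$1)" by simp
  then show ?thesis using d2 by (simp add: sum_2)
qed

lemma TrAbs_eq:
  fixes X :: "complex^2^2"
  assumes "trace X = 0" "\<exists>(T::complex^2^2) (d::complex^2). invertible T \<and> X = T ** diag_mat d ** matrix_inv T"
  shows "TrAbs X = 2 * sqrt (cmod (det X))"
  unfolding TrAbs_def
proof (rule the_equality)
  obtain T :: "complex^2^2" and d :: "complex^2" where "invertible T" "X = T ** diag_mat d ** matrix_inv T" using assms(2) by blast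
  then show "\<exists>(T::complex^2^2) (d::complex^2). invertible T \<and> X = T ** diag_mat d ** matrix_inv T \<and> 2 * sqrt (cmod (det X)) = (\<Sum>j\<in>UNIV. cmod (d $ j))"
    using TrAbs_unique[OF assms(1)] by metis
next
  fix s assume "\<exists>(T::complex^2^2) (d::complex^2). invertible T \<and> X = T ** diag_mat d ** matrix_inv T \<and> s = (\<Sum>j\<in>UNIV. cmod (d $ j))"
  then show "s = 2 * sqrt (cmod (det X))" using TrAbs_unique[OF assms(1)] by metis
qed

lemma diagonalizable_tr0:
  fixes p q w :: complex
  assumes "q \<noteq> 0" "p^2 + q*w \<noteq> 0"
  shows "\<exists>(T::complex^2^2) (d::complex^2). invertible T \<and> mk p q w (-p) = T ** diag_mat d ** matrix_inv T"
proof -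
  define l where "l = csqrt (p^2 + q*w)"
  have l2: "l^2 = p^2 + q*w" unfolding l_def by simp
  have l0: "l \<noteq> 0" using assms(2) l2 by auto
  define x where "x = -2*q*l"
  have x0: "x \<noteq> 0" using assms(1) l0 x_def by simp
  define T where "T = mk q q (l - p) (-l - p)"
  have dT: "q * (-l - p) - q * (l - p) = x" unfolding x_def by (simp add: algebra_simps)
  have Ti: "matrix_inv T = mk ((-l-p)/x) (-q/x) (-(l-p)/x) (q/x)"
    unfolding T_def using mk_inv[OF x0 dT] .
  have inv: "invertible T" unfolding invertible_def
    apply (rule exI[of _ "mk ((-l-p)/x) (-q/x) (-(l-p)/x) (q/x)"])
    using x0 dT by (simp add: T_def mk_mult mk_one mk_eq_iff field_simps)
  have pp: "p*p = l*l - q*w" using l2 by (simp add: power2_eq_square)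
  have "mk p q w (-p) = mk q q (l - p) (-l - p) ** diag_mat (vector [l, -l]) ** mk ((-l-p)/x) (-q/x) (-(l-p)/x) (q/x)"
    unfolding diag_mk using x0 l0 assms(1)
    apply (simp add: mk_mult mk_eq_iff vector_def x_def field_simps)
    using l2 by algebra
  then have "mk p q w (-p) = T ** diag_mat (vector [l, -l]) ** matrix_inv T"
    by (simp only: Ti) (simp add: T_def)
  then show ?thesis using inv by blast
qed

lemma TrAbs_zero: "TrAbs (0::complex^2^2) = 0"
proof -
  have "\<exists>(T::complex^2^2) (d::complex^2). invertible T \<and> (0::complex^2^2) = T ** diag_mat d ** matrix_inv T"
  proof (intro exI conjI)
    show "invertible (mat 1::complex^2^2)" unfolding invertible_def by (rule exI[of _ "mat 1"]) simp
    have "diag_mat (0::complex^2) = 0" by (simp add: diag_mat_def vec_eq_iff)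
    then show "(0::complex^2^2) = mat 1 ** diag_mat 0 ** matrix_inv (mat 1)" by simp
  qed
  moreover have "det (0::complex^2^2) = 0" by (simp add: det_2)
  ultimately show ?thesis using TrAbs_eq[of 0] by (simp add: trace_def)
qed

lemma ofRM_zero[simp]: "ofRM 0 = 0" by (simp add: ofRM_def vec_eq_iff)

lemma TrAbs_W:
  fixes W :: "real^2^2"
  assumes "W = mk w11 w12 w12 w22" "w11 > 0" "w11 * w22 - w12^2 > 0"
  shows "TrAbs (ofRM (W ** mk 0 (-a) a 0)) = 2 * sqrt (w11 * w22 - w12^2) * \<bar>a\<bar>"
proof (cases "a = 0")
  case True
  then show ?thesis using assms by (simp add: mk_mult mk_ofRM flip: mk_zero add: TrAbs_zero)
next
  case False
  have X: "ofRM (W ** mk 0 (-a) a 0) = mk (of_real (w12*a)) (of_real (-w11*a)) (of_real (w22*a)) (- of_real (w12*a))"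
    using assms by (simp add: mk_mult mk_ofRM mk_eq_iff)
  have q: "(of_real (-w11*a)::complex) \<noteq> 0" using False assms by simp
  have dd: "(of_real (w12*a))^2 + of_real (-w11*a) * of_real (w22*a) = - (of_real ((w11 * w22 - w12^2)*a^2)::complex)"
    by (simp add: algebra_simps power2_eq_square)
  have "(w11 * w22 - w12^2)*a^2 \<noteq> 0" using False assms by simp
  then have nz: "(of_real ((w11 * w22 - w12^2)*a^2)::complex) \<noteq> 0" by (metis of_real_eq_0_iff)
  have "TrAbs (ofRM (W ** mk 0 (-a) a 0)) = 2 * sqrt (cmod (det (ofRM (W ** mk 0 (-a) a 0))))"
    apply (rule TrAbs_eq)
     apply (simp add: X mk_trace)
    unfolding X apply (rule diagonalizable_tr0[OF q])
    using dd nz by simp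
  also have "det (ofRM (W ** mk 0 (-a) a 0)) = of_real ((w11 * w22 - w12^2)*a^2)"
    unfolding X by (simp add: mk_det algebra_simps power2_eq_square)
  also have "cmod (of_real ((w11 * w22 - w12^2)*a^2)) = (w11 * w22 - w12^2)*a^2"
  proof -
    have v0: "(w11*w22 - w12^2)*a^2 \<ge> 0" using assms by simp
    show ?thesis by (metis norm_of_real abs_of_nonneg v0)
  qed
  finally show ?thesis using assms by (simp add: real_sqrt_mult)
qed

lemma cross_inner_swap: "(cross3 a b) \<bullet> c = a \<bullet> (cross3 b c)"
  by (simp add: cross3_def inner_vec_def sum_3 vector_def algebra_simps)

lemma trace_rho_B: "trace (B (1/2) ((1/2) *\<^sub>R s) ** B (-(s \<bullet> x)) x ** B (-(s \<bullet> y)) y)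
   = Complex (x \<bullet> y - (s \<bullet> x) * (s \<bullet> y)) (s \<bullet> cross3 x y)"
  by (simp add: trace_BBB cross_mult_left cross_inner_swap algebra_simps)

lemma mk_mult_inv: fixes a :: "'a::field"
  assumes "x \<noteq> 0" "a*d - b*c = x"
  shows "mk a b c d ** mk (d/x) (-b/x) (-c/x) (a/x) = mat 1"
  using assms by (simp add: mk_mult mk_one mk_eq_iff field_simps)

lemma trace_mk_mult: "trace (mk (a::'a::comm_ring_1) b c d ** mk a' b' c' d') = a*a' + b*c' + c*b' + d*d'"
  by (simp add: mk_mult mk_trace)

locale qb =
  fixes s :: "real^3" and d :: "2 \<Rightarrow> real^3"
  assumes ss1: "s \<bullet> s < 1" and ncross: "cross3 (d 1) (d 2) \<noteq> 0"
begin

definition "rhoq = B (1/2) ((1/2) *\<^sub>R s)"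
definition "Dq i = B 0 ((1/2) *\<^sub>R d i)"
definition "g i j = d i \<bullet> d j"
definition "u i = s \<bullet> d i"
definition "nn = cross3 (d 1) (d 2)"
definition "e = s \<bullet> nn"
definition "r = 1 - s \<bullet> s"
definition "Dg = g 1 1 * g 2 2 - (g 1 2)^2"
definition "K = Dg - e^2"

lemma r_pos: "r > 0" using ss1 r_def by simp
lemma g_sym: "g i j = g j i" by (simp add: g_def inner_commute)
lemma Dg_nn: "Dg = nn \<bullet> nn"
  using norm_cross_dot[of "d 1" "d 2"]
  by (simp add: Dg_def g_def nn_def power2_norm_eq_inner power_mult_distrib)
lemma Dg_pos: "Dg > 0" using ncross by (simp add: Dg_nn nn_def)
lemma e2_le: "e^2 \<le> (s \<bullet> s) * Dg"
  using Cauchy_Schwarz_ineq[of s nn] by (simp add: e_def Dg_nn)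
lemma K_pos: "K > 0"
proof -
  have "(s \<bullet> s) * Dg < Dg" using ss1 Dg_pos by simp
  then show ?thesis using e2_le by (simp add: K_def)
qed
lemma gram: "g 2 2 * (u 1)^2 - 2 * g 1 2 * u 1 * u 2 + g 1 1 * (u 2)^2 + e^2 = Dg * (s \<bullet> s)"
  unfolding g_def u_def e_def nn_def Dg_def
  by (simp add: cross3_def inner_vec_def sum_3 vector_def power2_eq_square algebra_simps)
lemma dnn: "d 1 \<bullet> nn = 0" "d 2 \<bullet> nn = 0"
  by (simp_all add: nn_def dot_cross_self)

definition "l0 i = - u i / r"
definition "lv i = d i + (u i / r) *\<^sub>R s"
definition "Lq i = B (l0 i) (lv i)"

lemma s_lv: "s \<bullet> lv i = u i / r"
proof -
  have "s \<bullet> lv i = u i + u i / r * (s \<bullet> s)" by (simp add: lv_def u_def inner_add_right)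
  also have "\<dots> = u i / r" using r_pos by (simp add: r_def field_simps)
  finally show ?thesis .
qed
lemma lv_s: "lv i \<bullet> s = u i / r" using s_lv by (simp add: inner_commute)
lemma l0_eq: "l0 i = - (s \<bullet> lv i)" by (simp add: s_lv l0_def)
lemma Q_lv: "lv k \<bullet> v - (s \<bullet> lv k) * (s \<bullet> v) = d k \<bullet> v"
proof -
  have "lv k \<bullet> v = d k \<bullet> v + (u k / r) * (s \<bullet> v)" by (simp add: lv_def inner_add_left)
  then show ?thesis by (simp add: s_lv)
qed
lemma d_lv: "d k \<bullet> lv j = g k j + u k * u j / r"
  by (simp add: lv_def inner_add_right g_def u_def inner_commute)

lemma SLD_eq:
  assumes "rho \<theta> = rhoq" "\<forall>i. pder rho \<theta> i = Dq i"
  shows "SLD rho \<theta> i = Lq i"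
  unfolding SLD_def assms(1) assms(2)[rule_format]
proof (rule the_equality)
  have "(1/2::real) *\<^sub>R (rhoq ** Lq i + Lq i ** rhoq) = B (1/2 * l0 i + 1/2 * (s \<bullet> lv i)) ((1/2) *\<^sub>R (lv i + l0 i *\<^sub>R s))"
    by (simp add: rhoq_def Lq_def BB_sym B_scale B_inj algebra_simps inner_commute)
  also have "\<dots> = Dq i"
    unfolding Dq_def B_inj using r_pos
    by (simp add: l0_eq s_lv lv_s) (simp add: lv_def l0_def algebra_simps)
  finally show "hermitian (Lq i) \<and> Dq i = (1 / 2::real) *\<^sub>R (rhoq ** Lq i + Lq i ** rhoq)"
    by (simp add: Lq_def hermitian_B)
next
  fix L assume L: "hermitian L \<and> Dq i = (1/2::real) *\<^sub>R (rhoq ** L + L ** rhoq)"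
  then obtain a x where Lx: "L = B a x" using hermitian_ex_B by blast
  have "(1/2::real) *\<^sub>R (rhoq ** L + L ** rhoq) = B (1/2 * a + 1/2 * (s \<bullet> x)) ((1/2) *\<^sub>R (x + a *\<^sub>R s))"
    by (simp add: rhoq_def Lx BB_sym B_scale B_inj algebra_simps inner_commute)
  with L have eqs: "1/2 * a + 1/2 * (s \<bullet> x) = 0" "(1/2::real) *\<^sub>R (x + a *\<^sub>R s) = (1/2) *\<^sub>R d i"
    by (simp_all add: Dq_def B_inj)
  have "x + a *\<^sub>R s = d i" using arg_cong[OF eqs(2), of "(*\<^sub>R) 2"] by simp
  then have xe: "x = d i - a *\<^sub>R s" by (simp add: algebra_simps)
  have sx: "s \<bullet> x = u i - a * (s \<bullet> s)" using xe by (simp add: inner_diff_right u_def)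
  have "a + (u i - a * (s \<bullet> s)) = 0" using eqs(1) unfolding sx by (simp add: algebra_simps; linarith)
  then have "a * r = - u i" by (simp add: r_def algebra_simps)
  then have ae: "a = l0 i" using r_pos by (simp add: l0_def field_simps)
  then have "x = lv i" using xe by (simp add: lv_def l0_def)
  then show "L = Lq i" using ae Lx Lq_def by simp
qed

definition "Gq i j = g i j + u i * u j / r"
definition "Gm = mk (Gq 1 1) (Gq 1 2) (Gq 2 1) (Gq 2 2)"

lemma Gm_nth: "Gm $ i $ j = Gq i j"
  using exhaust_2[of i] exhaust_2[of j] by (auto simp: Gm_def)

lemma Fisher_entry: "Re (trace (rhoq ** ((1/2::real) *\<^sub>R (Lq i ** Lq j + Lq j ** Lq i)))) = Gq i j"
proof -
  have "Re (trace (rhoq ** ((1/2::real) *\<^sub>R (Lq i ** Lq j + Lq j ** Lq i))))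
     = lv i \<bullet> lv j - (s \<bullet> lv i) * (s \<bullet> lv j)"
    by (simp add: rhoq_def Lq_def BB_sym B_scale trace_BB l0_eq algebra_simps)
  also have "\<dots> = Gq i j" by (simp add: Q_lv d_lv Gq_def)
  finally show ?thesis .
qed

lemma SLD_Fisher_eq:
  assumes "rho \<theta> = rhoq" "\<forall>i. pder rho \<theta> i = Dq i"
  shows "SLD_Fisher rho \<theta> = Gm"
  by (simp add: vec_eq_iff SLD_Fisher_def SLD_eq[OF assms] assms(1) Fisher_entry Gm_nth)

lemma det_Gm: "Gq 1 1 * Gq 2 2 - Gq 1 2 * Gq 2 1 = K / r"
proof -
  have e2: "e^2 = Dg * (s \<bullet> s) - (g 2 2 * (u 1)^2 - 2 * g 1 2 * u 1 * u 2 + g 1 1 * (u 2)^2)"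
    using gram by simp
  have ss: "s \<bullet> s = 1 - r" by (simp add: r_def)
  have hK: "K = Dg - e^2" by (simp add: K_def)
  have hD: "Dg = g 1 1 * g 2 2 - (g 1 2)^2" by (simp add: Dg_def)
  have hr: "r = 1 - s \<bullet> s" by (simp add: r_def)
  show ?thesis using r_pos
    apply (simp add: Gq_def g_sym[of 2 1] field_simps)
    using gram hK hD hr by algebra
qed

definition "Gi = mk ((r * g 2 2 + (u 2)^2)/K) (-(r * g 1 2 + u 1 * u 2)/K) (-(r * g 1 2 + u 1 * u 2)/K) ((r * g 1 1 + (u 1)^2)/K)"

lemma Gi_alt: "Gi = mk (Gq 2 2/(K/r)) (- Gq 1 2/(K/r)) (- Gq 2 1/(K/r)) (Gq 1 1/(K/r))"
  using r_pos K_pos unfolding Gi_def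
  by (simp add: mk_eq_iff Gq_def g_sym[of 2 1] field_simps power2_eq_square)

lemma Ginv: "matrix_inv Gm = Gi"
  unfolding Gm_def Gi_alt using K_pos r_pos det_Gm by (intro mk_inv) auto

lemma G_Gi: "Gm ** Gi = mat 1"
  unfolding Gm_def Gi_alt using K_pos r_pos det_Gm by (intro mk_mult_inv) auto

lemma Gi_sym: "Gi $ i $ j = Gi $ j $ i"
  using exhaust_2[of i] exhaust_2[of j] by (auto simp: Gi_def)

lemma det_Gi: "Gi$1$1 * Gi$2$2 - Gi$1$2 * Gi$2$1 = r / K"
proof -
  have e2: "e^2 = Dg * (s \<bullet> s) - (g 2 2 * (u 1)^2 - 2 * g 1 2 * u 1 * u 2 + g 1 1 * (u 2)^2)"
    using gram by simp
  have ss: "s \<bullet> s = 1 - r" by (simp add: r_def)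
  have hK: "K = Dg - e^2" by (simp add: K_def)
  have hD: "Dg = g 1 1 * g 2 2 - (g 1 2)^2" by (simp add: Dg_def)
  have hr: "r = 1 - s \<bullet> s" by (simp add: r_def)
  show ?thesis using r_pos K_pos
    apply (simp add: Gi_def field_simps)
    using gram hK hD hr by algebra
qed

end

context qb begin

definition "mv i = (\<Sum>j\<in>UNIV. Gi$j$i *\<^sub>R lv j)"
definition "m0 i = (\<Sum>j\<in>UNIV. Gi$j$i * l0 j)"

lemma dual_eq:
  assumes "rho \<theta> = rhoq" "\<forall>i. pder rho \<theta> i = Dq i"
  shows "SLD_dual rho \<theta> i = B (m0 i) (mv i)"
  unfolding SLD_dual_def SLD_Fisher_eq[OF assms] Ginv SLD_eq[OF assms] Lq_def m0_def mv_def
  by (rule B_sum2)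

lemma m0_eq: "m0 i = - (s \<bullet> mv i)"
  by (simp add: m0_def mv_def inner_sum_right l0_eq sum_negf)

lemma d_mv: "d k \<bullet> mv i = (if k = i then 1 else 0)"
proof -
  have "d k \<bullet> mv i = (\<Sum>j\<in>UNIV. Gm$k$j * Gi$j$i)"
    by (simp add: mv_def inner_sum_right d_lv Gm_nth Gq_def mult.commute)
  also have "\<dots> = (Gm ** Gi) $ k $ i" by (simp add: matrix_matrix_mult_def)
  finally show ?thesis by (simp add: G_Gi mat_def)
qed

lemma Q_mv: "mv j \<bullet> mv i - (s \<bullet> mv j) * (s \<bullet> mv i) = Gi $ i $ j"
proof -
  have "mv j \<bullet> mv i - (s \<bullet> mv j) * (s \<bullet> mv i) =
     Gi$1$j * (lv 1 \<bullet> mv i - (s \<bullet> lv 1)*(s \<bullet> mv i)) + Gi$2$j * (lv 2 \<bullet> mv i - (s \<bullet> lv 2)*(s \<bullet> mv i))"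
    by (simp add: mv_def[of j] sum_2 inner_add_left inner_add_right algebra_simps)
  also have "\<dots> = Gi$1$j * (d 1 \<bullet> mv i) + Gi$2$j * (d 2 \<bullet> mv i)" by (simp add: Q_lv)
  also have "\<dots> = Gi $ i $ j" using exhaust_2[of i] by (auto simp: d_mv)
  finally show ?thesis .
qed

lemma s_cross_lv: "s \<bullet> cross3 (lv 1) (lv 2) = e"
  by (simp add: lv_def cross_add_left cross_add_right cross_mult_left cross_mult_right
      inner_add_right dot_cross_self e_def nn_def)

lemma cross_mv: "cross3 (mv 1) (mv 2) = (r/K) *\<^sub>R cross3 (lv 1) (lv 2)"
proof -
  have "cross3 (mv 1) (mv 2) = (Gi$1$1 * Gi$2$2 - Gi$2$1 * Gi$1$2) *\<^sub>R cross3 (lv 1) (lv 2)"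
    by (simp add: mv_def sum_2 cross_add_left cross_add_right cross_mult_left cross_mult_right
        algebra_simps cross_skew[of "lv 2" "lv 1"])
  then show ?thesis using det_Gi Gi_sym[of 1 2] by simp
qed

lemma s_cross_mv: "s \<bullet> cross3 (mv 1) (mv 2) = r*e/K" "s \<bullet> cross3 (mv 2) (mv 1) = -(r*e/K)"
  "s \<bullet> cross3 (mv i) (mv i) = 0"
  by (simp_all add: cross_mv s_cross_lv cross_skew[of "mv 2" "mv 1"])

lemma Zmat_eq:
  assumes "rho \<theta> = rhoq" "\<forall>i. pder rho \<theta> i = Dq i"
  shows "Zmat rho \<theta> = mk (Complex (Gi$1$1) 0) (Complex (Gi$1$2) (-(r*e/K))) (Complex (Gi$2$1) (r*e/K)) (Complex (Gi$2$2) 0)"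
proof -
  have "Zmat rho \<theta> $ i $ j = Complex (Gi $ i $ j) (s \<bullet> cross3 (mv j) (mv i))" for i j
    by (simp add: Zmat_def dual_eq[OF assms] assms(1) rhoq_def m0_eq trace_rho_B Q_mv)
  then show ?thesis by (simp add: vec_eq_iff forall_2 s_cross_mv)
qed

lemma Gi_mk: "Gi = mk (Gi$1$1) (Gi$1$2) (Gi$2$1) (Gi$2$2)" by (rule mk_eta)

lemma CS_eq:
  assumes "rho \<theta> = rhoq" "\<forall>i. pder rho \<theta> i = Dq i"
  shows "CS rho \<theta> W = trace (W ** Gi)"
  by (simp add: CS_def SLD_Fisher_eq[OF assms] Ginv)

lemma CZ_eq:
  assumes "rho \<theta> = rhoq" "\<forall>i. pder rho \<theta> i = Dq i"
  shows "CZ rho \<theta> W = trace (W ** Gi) + TrAbs (ofRM (W ** mk 0 (-(r*e/K)) (r*e/K) 0))"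
proof -
  have "ReM (Zmat rho \<theta>) = Gi" by (simp add: Zmat_eq[OF assms] mk_ReM flip: Gi_mk)
  moreover have "ImM (Zmat rho \<theta>) = mk 0 (-(r*e/K)) (r*e/K) 0" by (simp add: Zmat_eq[OF assms] mk_ImM)
  ultimately show ?thesis by (simp add: CZ_def)
qed

definition "Rq = B (2/r) ((-2/r) *\<^sub>R s)"

lemma rho_Rq: "rhoq ** Rq = mat 1" "Rq ** rhoq = mat 1"
proof -
  have "rhoq ** Rq = B (1/2 * (2/r) + 1/2 * (-2/r) * (s \<bullet> s)) ((1/2 * (-2/r) + 2/r * (1/2)) *\<^sub>R s)"
    unfolding rhoq_def Rq_def by (rule B_mult_par)
  also have "\<dots> = B 1 0" using r_pos by (simp add: r_def field_simps)
  finally show "rhoq ** Rq = mat 1" by (simp add: B_one)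
  have "Rq ** rhoq = B (2/r * (1/2) + (-2/r) * (1/2) * (s \<bullet> s)) ((2/r * (1/2) + 1/2 * (-2/r)) *\<^sub>R s)"
    unfolding rhoq_def Rq_def by (rule B_mult_par)
  also have "\<dots> = B 1 0" using r_pos by (simp add: r_def field_simps)
  finally show "Rq ** rhoq = mat 1" by (simp add: B_one)
qed

lemma RLD_eq:
  assumes "rho \<theta> = rhoq" "\<forall>i. pder rho \<theta> i = Dq i"
  shows "RLD rho \<theta> i = Rq ** Dq i"
  unfolding RLD_def assms(1) assms(2)[rule_format]
proof (rule the_equality)
  show "Dq i = rhoq ** (Rq ** Dq i)" by (simp add: matrix_mul_assoc rho_Rq)
next
  fix L assume "Dq i = rhoq ** L"
  then have "Rq ** Dq i = (Rq ** rhoq) ** L" by (simp add: matrix_mul_assoc)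
  then show "L = Rq ** Dq i" by (simp add: rho_Rq)
qed

definition "Gt = mk (complex_of_real (g 1 1 / r)) (Complex (g 1 2 / r) (e / r)) (Complex (g 1 2 / r) (-e / r)) (complex_of_real (g 2 2 / r))"

lemma RLD_Fisher_eq:
  assumes "rho \<theta> = rhoq" "\<forall>i. pder rho \<theta> i = Dq i"
  shows "RLD_Fisher rho \<theta> = Gt"
proof -
  have "RLD_Fisher rho \<theta> $ i $ j = trace (Dq j ** Dq i ** Rq)" for i j
  proof -
    have "rhoq ** (Rq ** Dq j) ** cadj (Rq ** Dq i) = Dq j ** Dq i ** Rq"
    proof -
      have cD: "cadj (Dq k) = Dq k" for k by (simp add: Dq_def cadj_B)
      have cR: "cadj Rq = Rq" by (simp add: Rq_def cadj_B)
      show ?thesis by (simp add: cadj_mult cD cR matrix_mul_assoc rho_Rq)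
    qed
    then show ?thesis by (simp add: RLD_Fisher_def RLD_eq[OF assms] assms(1))
  qed
  moreover have "trace (Dq j ** Dq i ** Rq) = Complex (g j i / r) (- ((cross3 (d j) (d i)) \<bullet> s) / r)" for i j
    by (simp add: Dq_def Rq_def trace_BBB cross_mult_left cross_mult_right g_def)
  ultimately show ?thesis
    by (simp add: vec_eq_iff forall_2 Gt_def complex_eq_iff e_def nn_def g_sym[of 2 1]
        cross_skew[of "d 2" "d 1"] inner_commute)
qed

lemma Gt_inv: "matrix_inv Gt = mk (complex_of_real (r * g 2 2 / K)) (Complex (-r * g 1 2 / K) (-r * e / K))
    (Complex (-r * g 1 2 / K) (r * e / K)) (complex_of_real (r * g 1 1 / K))"
proof -
  have x0: "complex_of_real (K / r^2) \<noteq> 0" using K_pos r_pos by simp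
  have dt: "complex_of_real (g 1 1 / r) * complex_of_real (g 2 2 / r) - Complex (g 1 2 / r) (e / r) * Complex (g 1 2 / r) (-e / r)
     = complex_of_real (K / r^2)"
    using r_pos by (simp add: complex_eq_iff K_def Dg_def field_simps power2_eq_square)
  show ?thesis unfolding Gt_def mk_inv[OF x0 dt]
    using r_pos K_pos by (simp add: mk_eq_iff complex_eq_iff field_simps power2_eq_square)
qed

lemma CR_eq:
  assumes "rho \<theta> = rhoq" "\<forall>i. pder rho \<theta> i = Dq i"
  shows "CR rho \<theta> W = trace (W ** mk (r * g 2 2 / K) (-r * g 1 2 / K) (-r * g 1 2 / K) (r * g 1 1 / K))
     + TrAbs (ofRM (W ** mk 0 (-(r*e/K)) (r*e/K) 0))"
  by (simp add: CR_def RLD_Fisher_eq[OF assms] Gt_inv mk_ReM mk_ImM)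

end

lemma I3: fixes y a b :: "real^3"
  shows "((a\<bullet>a)*(b\<bullet>b) - (a\<bullet>b)^2) *\<^sub>R y = (y \<bullet> cross3 a b) *\<^sub>R cross3 a b
     + (y\<bullet>a) *\<^sub>R ((b\<bullet>b) *\<^sub>R a - (a\<bullet>b) *\<^sub>R b) + (y\<bullet>b) *\<^sub>R ((a\<bullet>a) *\<^sub>R b - (a\<bullet>b) *\<^sub>R a)"
  by (simp add: cross3_def inner_vec_def sum_3 vector_def vec_eq_iff forall_3 power2_eq_square algebra_simps)

lemma I4: fixes a b :: "real^3"
  shows "cross3 a (cross3 a b) = (a\<bullet>b) *\<^sub>R a - (a\<bullet>a) *\<^sub>R b"
    "cross3 b (cross3 a b) = (b\<bullet>b) *\<^sub>R a - (a\<bullet>b) *\<^sub>R b"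
  by (simp_all add: cross3_def inner_vec_def sum_3 vector_def vec_eq_iff forall_3 algebra_simps)

context qb begin

definition "xq t j = mv j + t j *\<^sub>R nn"
definition "Xq t j = B (-(s \<bullet> xq t j)) (xq t j)"

lemma Dq_trace: "trace (Dq k ** B a x) = complex_of_real (d k \<bullet> x)"
  by (simp add: Dq_def trace_BB)
lemma rho_trace: "trace (rhoq ** B a x) = complex_of_real (a + s \<bullet> x)"
  by (simp add: rhoq_def trace_BB)

lemma d_xq: "d k \<bullet> xq t j = (if k = j then 1 else 0)"
  using exhaust_2[of k] by (auto simp: xq_def inner_add_right d_mv dnn)

lemma Xq_in:
  assumes "rho \<theta> = rhoq" "\<forall>i. pder rho \<theta> i = Dq i"
  shows "Xq t \<in> locally_unbiased rho \<theta>"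
  unfolding locally_unbiased_def using assms
  by (simp add: Xq_def hermitian_B rho_trace Dq_trace d_xq)

lemma X_form:
  assumes "rho \<theta> = rhoq" "\<forall>i. pder rho \<theta> i = Dq i" "X \<in> locally_unbiased rho \<theta>"
  shows "\<exists>t. X = Xq t"
proof -
  have X: "\<forall>i. hermitian (X i)" "\<forall>i. trace (rhoq ** X i) = 0"
    "\<forall>i j. trace (Dq i ** X j) = (if i = j then 1 else 0)"
    using assms unfolding locally_unbiased_def by auto
  have "\<forall>j. \<exists>p. X j = B (fst p) (snd p)" using X(1) hermitian_ex_B by fastforce
  then obtain f where f: "\<forall>j. X j = B (fst (f j)) (snd (f j))" by metis
  define x where "x j = snd (f j)" for j
  define a where "a j = fst (f j)" for j
  have Xj: "X j = B (a j) (x j)" for j using f a_def x_def by simp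
  have aj: "a j = - (s \<bullet> x j)" for j
  proof -
    have "trace (rhoq ** X j) = 0" using X(2) by blast
    then have "complex_of_real (a j + s \<bullet> x j) = 0" by (simp add: Xj rho_trace)
    then have "a j + s \<bullet> x j = 0" by (simp only: of_real_eq_0_iff)
    then show ?thesis by linarith
  qed
  have dx: "d k \<bullet> x j = (if k = j then 1 else 0)" for k j
  proof -
    have "trace (Dq k ** X j) = (if k = j then 1 else 0)" using X(3) by blast
    then have "complex_of_real (d k \<bullet> x j) = complex_of_real (if k = j then 1 else 0)"
      by (simp add: Xj Dq_trace)
    then show ?thesis by (simp only: of_real_eq_iff)
  qed
  define t where "t j = ((x j - mv j) \<bullet> nn) / Dg" for j
  have xj: "x j = xq t j" for j
  proof -
    let ?y = "x j - mv j"
    have y0: "d 1 \<bullet> ?y = 0" "d 2 \<bullet> ?y = 0" by (simp_all add: inner_diff_right dx d_mv)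
    then have y1: "?y \<bullet> d 1 = 0" "?y \<bullet> d 2 = 0" by (simp_all add: inner_commute)
    have eq: "Dg *\<^sub>R ?y = (?y \<bullet> nn) *\<^sub>R nn"
      using I3[of "d 1" "d 2" ?y] y1 by (simp add: Dg_def g_def nn_def)
    have "?y = (1/Dg) *\<^sub>R (Dg *\<^sub>R ?y)" using Dg_pos by simp
    also have "\<dots> = ((?y \<bullet> nn) / Dg) *\<^sub>R nn" unfolding eq by simp
    finally have "?y = t j *\<^sub>R nn" unfolding t_def .
    then show ?thesis by (simp add: xq_def algebra_simps)
  qed
  have "X = Xq t" by (rule ext) (simp add: Xj aj xj Xq_def)
  then show ?thesis by blast
qed

lemma Q_mv_nn: "mv j \<bullet> nn = e * (s \<bullet> mv j)"
proof -
  have "mv j \<bullet> nn - (s \<bullet> mv j) * e =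
     Gi$1$j * (lv 1 \<bullet> nn - (s \<bullet> lv 1)*(s \<bullet> nn)) + Gi$2$j * (lv 2 \<bullet> nn - (s \<bullet> lv 2)*(s \<bullet> nn))"
    by (simp add: mv_def sum_2 inner_add_left inner_add_right e_def algebra_simps)
  also have "\<dots> = 0" by (simp add: Q_lv dnn)
  finally show ?thesis by (simp add: algebra_simps)
qed

lemma ZX_entry: "trace (rhoq ** Xq t j ** Xq t i) = Complex (Gi $ i $ j + K * t j * t i) (s \<bullet> cross3 (xq t j) (xq t i))"
proof -
  have "xq t j \<bullet> xq t i - (s \<bullet> xq t j) * (s \<bullet> xq t i) = Gi $ i $ j + K * t j * t i"
  proof -
    have "xq t j \<bullet> xq t i - (s \<bullet> xq t j) * (s \<bullet> xq t i) =
        (mv j \<bullet> mv i - (s \<bullet> mv j) * (s \<bullet> mv i)) + t i * (mv j \<bullet> nn - e * (s \<bullet> mv j))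
        + t j * (mv i \<bullet> nn - e * (s \<bullet> mv i)) + t j * t i * (nn \<bullet> nn - e^2)"
      by (simp add: xq_def inner_add_left inner_add_right e_def inner_commute algebra_simps power2_eq_square)
    also have "\<dots> = Gi $ i $ j + K * t j * t i"
      by (simp add: Q_mv Q_mv_nn Dg_nn[symmetric] K_def)
    finally show ?thesis .
  qed
  then show ?thesis by (simp add: Xq_def rhoq_def trace_rho_B)
qed

lemma s_cross_lv_nn: "s \<bullet> cross3 (lv k) nn = s \<bullet> cross3 (d k) nn"
  by (simp add: lv_def cross_add_left cross_mult_left inner_add_right dot_cross_self)

lemma beta: "s \<bullet> cross3 (mv 1) nn = - u 2" "s \<bullet> cross3 (mv 2) nn = u 1"
proof -
  have c1: "s \<bullet> cross3 (d 1) nn = g 1 2 * u 1 - g 1 1 * u 2"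
    by (simp add: nn_def I4 inner_diff_right g_def u_def)
  have c2: "s \<bullet> cross3 (d 2) nn = g 2 2 * u 1 - g 1 2 * u 2"
    by (simp add: nn_def I4 inner_diff_right g_def u_def inner_commute)
  have m: "s \<bullet> cross3 (mv j) nn = Gi$1$j * (s \<bullet> cross3 (d 1) nn) + Gi$2$j * (s \<bullet> cross3 (d 2) nn)" for j
    by (simp add: mv_def sum_2 cross_add_left cross_mult_left inner_add_right s_cross_lv_nn)
  have hK: "K = Dg - e^2" by (simp add: K_def)
  have hD: "Dg = g 1 1 * g 2 2 - (g 1 2)^2" by (simp add: Dg_def)
  have hr: "r = 1 - s \<bullet> s" by (simp add: r_def)
  show "s \<bullet> cross3 (mv 1) nn = - u 2"
    unfolding m c1 c2 using K_pos
    apply (simp add: Gi_def field_simps)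
    using gram hK hD hr by algebra
  show "s \<bullet> cross3 (mv 2) nn = u 1"
    unfolding m c1 c2 using K_pos
    apply (simp add: Gi_def field_simps)
    using gram hK hD hr by algebra
qed

lemma s_cross_xq: "s \<bullet> cross3 (xq t 1) (xq t 2) = r*e/K - (t 1 * u 1 + t 2 * u 2)"
   "s \<bullet> cross3 (xq t 2) (xq t 1) = -(r*e/K - (t 1 * u 1 + t 2 * u 2))"
   "s \<bullet> cross3 (xq t i) (xq t i) = 0"
proof -
  have "s \<bullet> cross3 (xq t 1) (xq t 2) = s \<bullet> cross3 (mv 1) (mv 2) + t 2 * (s \<bullet> cross3 (mv 1) nn) - t 1 * (s \<bullet> cross3 (mv 2) nn)"
    by (simp add: xq_def cross_add_left cross_add_right cross_mult_left cross_mult_right inner_add_right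
        cross_skew[of nn "mv 2"] algebra_simps)
  then show "s \<bullet> cross3 (xq t 1) (xq t 2) = r*e/K - (t 1 * u 1 + t 2 * u 2)"
    by (simp add: s_cross_mv beta algebra_simps)
  then show "s \<bullet> cross3 (xq t 2) (xq t 1) = -(r*e/K - (t 1 * u 1 + t 2 * u 2))"
    by (simp add: cross_skew[of "xq t 2"])
  show "s \<bullet> cross3 (xq t i) (xq t i) = 0" by simp
qed

lemma hfun_Xq:
  assumes "rho \<theta> = rhoq" "\<forall>i. pder rho \<theta> i = Dq i" "W = mk w11 w12 w12 w22"
  shows "hfun rho \<theta> (Xq t) W = trace (W ** Gi) + K * (w11 * (t 1)^2 + 2 * w12 * t 1 * t 2 + w22 * (t 2)^2)
      + TrAbs (ofRM (W ** mk 0 (-(r*e/K - (t 1 * u 1 + t 2 * u 2))) (r*e/K - (t 1 * u 1 + t 2 * u 2)) 0))"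
proof -
  have Z: "ZmatX rho \<theta> (Xq t) = mk (Complex (Gi$1$1 + K * t 1 * t 1) 0)
       (Complex (Gi$1$2 + K * t 2 * t 1) (-(r*e/K - (t 1 * u 1 + t 2 * u 2))))
       (Complex (Gi$2$1 + K * t 1 * t 2) (r*e/K - (t 1 * u 1 + t 2 * u 2)))
       (Complex (Gi$2$2 + K * t 2 * t 2) 0)"
    by (simp add: vec_eq_iff forall_2 ZmatX_def assms(1) ZX_entry s_cross_xq)
  have "trace (W ** ReM (ZmatX rho \<theta> (Xq t))) = trace (W ** Gi) + K * (w11 * (t 1)^2 + 2 * w12 * t 1 * t 2 + w22 * (t 2)^2)"
    apply (subst Gi_mk)
    by (simp add: Z mk_ReM assms(3) trace_mk_mult Gi_sym[of 2 1] algebra_simps power2_eq_square)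
  moreover have "ImM (ZmatX rho \<theta> (Xq t)) = mk 0 (-(r*e/K - (t 1 * u 1 + t 2 * u 2))) (r*e/K - (t 1 * u 1 + t 2 * u 2)) 0"
    by (simp add: Z mk_ImM)
  ultimately show ?thesis by (simp add: hfun_def)
qed

end

lemma quad_adj: fixes w11 w12 w22 u1 u2 :: real shows
  "w11*(w22*u1 - w12*u2)^2 + 2*w12*(w22*u1 - w12*u2)*(w11*u2 - w12*u1) + w22*(w11*u2 - w12*u1)^2
   = (w11*w22 - w12^2)*(w11*u2^2 - 2*w12*u1*u2 + w22*u1^2)"
  by (simp add: power2_eq_square algebra_simps)

lemma lin_adj: fixes w11 w12 w22 u1 u2 :: real shows
  "(w22*u1 - w12*u2)*u1 + (w11*u2 - w12*u1)*u2 = w11*u2^2 - 2*w12*u1*u2 + w22*u1^2"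
  by (simp add: power2_eq_square algebra_simps)

lemma cs_adj: fixes w11 w12 w22 u1 u2 t1 t2 :: real shows
  "(w11*u2^2 - 2*w12*u1*u2 + w22*u1^2) * (w11*t1^2 + 2*w12*t1*t2 + w22*t2^2) - (w11*w22 - w12^2)*(t1*u1+t2*u2)^2
   = (u1*(w12*t1 + w22*t2) - u2*(w11*t1 + w12*t2))^2"
  by (simp add: power2_eq_square algebra_simps)

lemma q_pos: fixes w11 w12 w22 t1 t2 :: real
  assumes "w11 > 0" "w11*w22 - w12^2 > 0"
  shows "w11*t1^2 + 2*w12*t1*t2 + w22*t2^2 \<ge> 0"
proof -
  have "w11 * (w11*t1^2 + 2*w12*t1*t2 + w22*t2^2) = (w11*t1 + w12*t2)^2 + (w11*w22 - w12^2)*t2^2"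
    by (simp add: power2_eq_square algebra_simps)
  also have "\<dots> \<ge> 0" using assms(2) by (intro add_nonneg_nonneg) auto
  finally have "w11 * (w11*t1^2 + 2*w12*t1*t2 + w22*t2^2) \<ge> 0" .
  then show ?thesis using assms(1) by (metis less_le_not_le mult_le_0_iff mult_le_cancel_left_pos mult_zero_right)
qed

lemma q_zero: fixes w11 w12 w22 t1 t2 :: real
  assumes "w11 > 0" "w11*w22 - w12^2 > 0" "w22*t1^2 - 2*w12*t1*t2 + w11*t2^2 = 0"
  shows "t1 = 0" "t2 = 0"
proof -
  have "w11 * (w22*t1^2 - 2*w12*t1*t2 + w11*t2^2) = (w11*t2 - w12*t1)^2 + (w11*w22 - w12^2)*t1^2"
    by (simp add: power2_eq_square algebra_simps)
  then have "(w11*t2 - w12*t1)^2 + (w11*w22 - w12^2)*t1^2 = 0" using assms(3) by simp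
  moreover have "(w11*t2 - w12*t1)^2 \<ge> 0" "(w11*w22 - w12^2)*t1^2 \<ge> 0" using assms by auto
  ultimately have "(w11*w22 - w12^2)*t1^2 = 0" "(w11*t2 - w12*t1)^2 = 0" by linarith+
  then show t1: "t1 = 0" using assms by simp
  then show "t2 = 0" using \<open>(w11*t2 - w12*t1)^2 = 0\<close> assms by simp
qed

definition optF :: "real \<Rightarrow> real \<Rightarrow> real \<Rightarrow> real \<Rightarrow> real" where "optF c0 A c E = (if c0 - A + c*\<bar>E\<bar> \<ge> ((c0 + c*\<bar>E\<bar>) + c0)/2 then c0 - A + c*\<bar>E\<bar>
   else c0 - A + c*\<bar>E\<bar> + (((c0 + c*\<bar>E\<bar>) + c0)/2 - (c0 - A + c*\<bar>E\<bar>))^2 / ((c0 + c*\<bar>E\<bar>) - (c0 - A + c*\<bar>E\<bar>)))"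

lemma optF_case2: fixes sw E A c0 :: real assumes "sw > 0" "sw*\<bar>E\<bar> < A"
  shows "optF c0 A (2* sw) E = c0 + sw^2*E^2/A"
proof -
  have "0 \<le> sw*\<bar>E\<bar>" using assms(1) by simp
  then have A: "A > 0" using assms(2) by linarith
  have "\<not> (c0 - A + 2* sw*\<bar>E\<bar> \<ge> ((c0 + 2* sw*\<bar>E\<bar>) + c0)/2)" using assms by simp
  moreover have n: "((c0 + 2* sw*\<bar>E\<bar>) + c0)/2 - (c0 - A + 2* sw*\<bar>E\<bar>) = A - sw*\<bar>E\<bar>" by (simp add: field_simps)
  moreover have dn: "(c0 + 2* sw*\<bar>E\<bar>) - (c0 - A + 2* sw*\<bar>E\<bar>) = A" by simp
  ultimately have "optF c0 A (2* sw) E = c0 - A + 2* sw*\<bar>E\<bar> + (A - sw*\<bar>E\<bar>)^2 / A"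
    unfolding optF_def by (simp only: if_False n dn)
  also have "\<dots> = c0 + sw^2*E^2/A" using A
    by (simp add: field_simps power2_eq_square)
  finally show ?thesis .
qed

lemma optF_case1: fixes sw E A c0 :: real assumes "sw*\<bar>E\<bar> \<ge> A"
  shows "optF c0 A (2* sw) E = c0 - A + 2* sw*\<bar>E\<bar>"
  using assms unfolding optF_def by simp

lemma opt_lower:
  fixes w11 w12 w22 K c0 E u1 u2 t1 t2 :: real
  assumes "w11 > 0" "w11*w22 - w12^2 > 0" "K > 0" "sw = sqrt (w11*w22 - w12^2)"
    "A = (w11*u2^2 - 2*w12*u1*u2 + w22*u1^2)/K"
  shows "c0 + K*(w11*t1^2 + 2*w12*t1*t2 + w22*t2^2) + 2* sw*\<bar>E - (t1*u1 + t2*u2)\<bar> \<ge> optF c0 A (2* sw) E"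
proof -
  define w where "w = w11*w22 - w12^2"
  define Q where "Q = w11*t1^2 + 2*w12*t1*t2 + w22*t2^2"
  define y where "y = t1*u1 + t2*u2"
  define Pd where "Pd = w11*u2^2 - 2*w12*u1*u2 + w22*u1^2"
  have w: "w > 0" using assms w_def by simp
  have sw: "sw > 0" "sw^2 = w" using assms w w_def by auto
  have Q: "Q \<ge> 0" using q_pos[OF assms(1,2)] Q_def by simp
  have PdA: "Pd = A * K" using assms(3,5) Pd_def by simp
  have eq: "Pd * Q - w * y^2 = (u1*(w12*t1 + w22*t2) - u2*(w11*t1 + w12*t2))^2"
    unfolding Pd_def Q_def w_def y_def by (rule cs_adj)
  have "0 \<le> (u1*(w12*t1 + w22*t2) - u2*(w11*t1 + w12*t2))^2" by simp
  then have csi: "Pd * Q \<ge> w * y^2" using eq by linarith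
  have Pd0: "Pd \<ge> 0" using q_pos[OF assms(1,2), of u2 "-u1"] Pd_def by (simp add: algebra_simps power2_eq_square)
  have A0: "A \<ge> 0" using Pd0 PdA assms(3) by (simp add: zero_le_mult_iff)
  have AKQ: "A * (K * Q) \<ge> (sw * \<bar>y\<bar>)^2" using csi PdA sw by (simp add: power_mult_distrib algebra_simps)
  show ?thesis
  proof (cases "sw*\<bar>E\<bar> \<ge> A")
    case True
    have "K * Q + 2* sw*\<bar>E - y\<bar> \<ge> 2* sw*\<bar>E\<bar> - A"
    proof (cases "A = 0")
      case True
      then have "Pd = 0" using PdA by simp
      then have "w22*u1^2 - 2*w12*u1*u2 + w11*u2^2 = 0" using Pd_def by (simp add: algebra_simps)
      then have "u1 = 0" "u2 = 0" using q_zero[OF assms(1,2), of u1 u2] by auto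
      then have "y = 0" by (simp add: y_def)
      then show ?thesis using True Q assms(3) by simp
    next
      case False
      then have Ap: "A > 0" using A0 by simp
      have "A * (K*Q - 2* sw*\<bar>y\<bar> + A) = A*(K*Q) - 2*A* sw*\<bar>y\<bar> + A^2" by (simp add: algebra_simps power2_eq_square)
      also have "\<dots> \<ge> (sw*\<bar>y\<bar> - A)^2" using AKQ by (simp add: power2_eq_square algebra_simps)
      finally have h0: "A * (K*Q - 2* sw*\<bar>y\<bar> + A) \<ge> (sw*\<bar>y\<bar> - A)^2" .
      have "A * (K*Q - 2* sw*\<bar>y\<bar> + A) \<ge> 0" using h0 zero_le_power2[of "sw*\<bar>y\<bar> - A"] by linarith
      then have h: "K*Q - 2* sw*\<bar>y\<bar> + A \<ge> 0" using Ap by (simp add: zero_le_mult_iff)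
      have tri: "\<bar>E - y\<bar> \<ge> \<bar>E\<bar> - \<bar>y\<bar>" by simp
      have "2* sw*\<bar>E - y\<bar> \<ge> 2* sw*\<bar>E\<bar> - 2* sw*\<bar>y\<bar>"
        using mult_left_mono[OF tri, of "2* sw"] sw by (simp add: algebra_simps)
      then show ?thesis using h by linarith
    qed
    then show ?thesis using optF_case1[OF True] Q_def y_def by simp
  next
    case False
    then have c2: "sw*\<bar>E\<bar> < A" by simp
    have "0 \<le> sw*\<bar>E\<bar>" using sw by simp
    then have Ap: "A > 0" using c2 by linarith
    have "A * (K*Q) + 2*A* sw*\<bar>E - y\<bar> \<ge> w * E^2"
    proof (cases "\<bar>y\<bar> \<ge> \<bar>E\<bar>")
      case True
      then have "y^2 \<ge> E^2" by (metis abs_le_square_iff)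
      then have "w*y^2 \<ge> w*E^2" using w by simp
      moreover have "2*A* sw*\<bar>E - y\<bar> \<ge> 0" using Ap sw by simp
      ultimately show ?thesis using AKQ sw by (simp add: power_mult_distrib)
    next
      case False
      have a: "E^2 - y^2 = (\<bar>E\<bar> - \<bar>y\<bar>)*(\<bar>E\<bar> + \<bar>y\<bar>)" by (simp add: power2_eq_square algebra_simps abs_mult_self_eq)
      have b: "\<bar>E\<bar> - \<bar>y\<bar> \<le> \<bar>E - y\<bar>" by simp
      have c: "\<bar>E\<bar> + \<bar>y\<bar> \<le> 2*\<bar>E\<bar>" using False by simp
      have "E^2 - y^2 \<le> \<bar>E - y\<bar> * (2*\<bar>E\<bar>)" unfolding a
        apply (rule mult_mono) using b c False by auto
      then have "w*(E^2 - y^2) \<le> w*(\<bar>E - y\<bar> * (2*\<bar>E\<bar>))" using w by simp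
      also have "\<dots> = 2*\<bar>E - y\<bar> * sw * (sw*\<bar>E\<bar>)" using sw by (simp add: power2_eq_square algebra_simps)
      also have "\<dots> \<le> 2*\<bar>E - y\<bar> * sw * A" using c2 sw by (simp add: mult_left_mono)
      finally have "w*E^2 - w*y^2 \<le> 2*A* sw*\<bar>E - y\<bar>" by (simp add: algebra_simps)
      then show ?thesis using AKQ sw by (simp add: power_mult_distrib)
    qed
    then have "A * (K*Q + 2* sw*\<bar>E - y\<bar>) \<ge> w * E^2" by (simp add: algebra_simps)
    then have "K*Q + 2* sw*\<bar>E - y\<bar> \<ge> w * E^2 / A" using Ap by (simp add: pos_divide_le_eq mult.commute)
    then show ?thesis using optF_case2[OF sw(1) c2] sw Q_def y_def by simp
  qed
qed

lemma opt_attained: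
  fixes w11 w12 w22 K c0 E u1 u2 :: real
  assumes "w11 > 0" "w11*w22 - w12^2 > 0" "K > 0" "sw = sqrt (w11*w22 - w12^2)"
    "A = (w11*u2^2 - 2*w12*u1*u2 + w22*u1^2)/K"
  shows "\<exists>t1 t2. c0 + K*(w11*t1^2 + 2*w12*t1*t2 + w22*t2^2) + 2* sw*\<bar>E - (t1*u1 + t2*u2)\<bar> = optF c0 A (2* sw) E"
proof -
  define w where "w = w11*w22 - w12^2"
  define Pd where "Pd = w11*u2^2 - 2*w12*u1*u2 + w22*u1^2"
  have w: "w > 0" using assms w_def by simp
  have sw: "sw > 0" "sw^2 = w" using assms w w_def by auto
  have PdA: "Pd = A * K" using assms(3,5) Pd_def by simp
  have Pd0: "Pd \<ge> 0" using q_pos[OF assms(1,2), of u2 "-u1"] Pd_def by (simp add: algebra_simps power2_eq_square)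
  have val: "c0 + K*(w11*(l*(w22*u1 - w12*u2))^2 + 2*w12*(l*(w22*u1 - w12*u2))*(l*(w11*u2 - w12*u1)) + w22*(l*(w11*u2 - w12*u1))^2)
     + 2* sw*\<bar>E - ((l*(w22*u1 - w12*u2))*u1 + (l*(w11*u2 - w12*u1))*u2)\<bar>
     = c0 + K*l^2*w*Pd + 2* sw*\<bar>E - l*Pd\<bar>" for l
  proof -
    have "w11*(l*(w22*u1 - w12*u2))^2 + 2*w12*(l*(w22*u1 - w12*u2))*(l*(w11*u2 - w12*u1)) + w22*(l*(w11*u2 - w12*u1))^2
       = l^2 * (w11*(w22*u1 - w12*u2)^2 + 2*w12*(w22*u1 - w12*u2)*(w11*u2 - w12*u1) + w22*(w11*u2 - w12*u1)^2)"
      by (simp add: power2_eq_square algebra_simps)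
    also have "\<dots> = l^2*w*Pd" using quad_adj[of w11 w22 u1 w12 u2] by (simp add: w_def Pd_def)
    finally have 1: "w11*(l*(w22*u1 - w12*u2))^2 + 2*w12*(l*(w22*u1 - w12*u2))*(l*(w11*u2 - w12*u1)) + w22*(l*(w11*u2 - w12*u1))^2 = l^2*w*Pd" .
    have 2: "(l*(w22*u1 - w12*u2))*u1 + (l*(w11*u2 - w12*u1))*u2 = l*Pd"
      by (simp add: Pd_def power2_eq_square algebra_simps)
    show ?thesis by (simp only: 1 2)
  qed
  show ?thesis
  proof (cases "sw*\<bar>E\<bar> \<ge> A")
    case True
    show ?thesis
    proof (cases "A = 0")
      case True
      then show ?thesis using optF_case1[OF \<open>sw*\<bar>E\<bar> \<ge> A\<close>] by (intro exI[of _ 0]) simp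
    next
      case False
      then have Ap: "A > 0" using Pd0 PdA assms(3) by (simp add: zero_le_mult_iff)
      then have Pdp: "Pd > 0" using PdA assms(3) by simp
      define ys where "ys = (if E \<ge> 0 then A/sw else -A/sw)"
      define l where "l = ys / Pd"
      have lPd: "l * Pd = ys" using Pdp l_def by simp
      have ys2: "ys^2 = A^2/w" using sw by (simp add: ys_def power_divide)
      have k: "K*l^2*w*Pd = A"
      proof -
        have "K*l^2*w*Pd = K * w * ys^2 / Pd" unfolding l_def using Pdp by (simp add: power2_eq_square field_simps)
        also have "\<dots> = A" using ys2 PdA Ap assms(3) w by (simp add: field_simps power2_eq_square)
        finally show ?thesis .
      qed
      have AE: "A/sw \<le> \<bar>E\<bar>" using True sw by (simp add: divide_le_eq mult.commute)
      have ab: "\<bar>E - ys\<bar> = \<bar>E\<bar> - A/sw" using AE Ap sw unfolding ys_def by (auto simp: abs_if)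
      have "c0 + K*l^2*w*Pd + 2* sw*\<bar>E - l*Pd\<bar> = c0 - A + 2* sw*\<bar>E\<bar>"
        unfolding k lPd ab using sw by (simp add: algebra_simps)
      then show ?thesis using val[of l] optF_case1[OF True, of c0]
        by (intro exI[of _ "l*(w22*u1 - w12*u2)"] exI[of _ "l*(w11*u2 - w12*u1)"]) linarith
    qed
  next
    case False
    then have c2: "sw*\<bar>E\<bar> < A" by simp
    have "0 \<le> sw*\<bar>E\<bar>" using sw by simp
    then have Ap: "A > 0" using c2 by linarith
    then have Pdp: "Pd > 0" using PdA assms(3) by simp
    define l where "l = E / Pd"
    have "c0 + K*l^2*w*Pd + 2* sw*\<bar>E - l*Pd\<bar> = c0 + sw^2*E^2/A"
      using Pdp PdA sw Ap assms(3) unfolding l_def by (simp add: field_simps power2_eq_square)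
    then show ?thesis using val[of l] optF_case2[OF sw(1) c2, of c0]
        by (intro exI[of _ "l*(w22*u1 - w12*u2)"] exI[of _ "l*(w11*u2 - w12*u1)"]) linarith
  qed
qed

lemma hermitian_choice:
  assumes "\<forall>i. hermitian (P i)"
  shows "\<exists>a x. \<forall>i. P i = B (a i) (x i)"
proof -
  have "\<forall>j. \<exists>p. P j = B (fst p) (snd p)" using assms hermitian_ex_B by fastforce
  then obtain f where f: "\<forall>j. P j = B (fst (f j)) (snd (f j))" by metis
  then show ?thesis by (intro exI[of _ "\<lambda>j. fst (f j)"] exI[of _ "\<lambda>j. snd (f j)"]) simp
qed

context qb begin

lemma main_result:
  fixes W :: "real^2^2"
  assumes A1: "rho \<theta> = rhoq" and A2: "\<forall>i. pder rho \<theta> i = Dq i"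
    and Wm: "W = mk w11 w12 w12 w22" and w11p: "w11 > 0" and wdet: "w11 * w22 - w12^2 > 0"
  shows "CH rho \<theta> W =
    (if CR rho \<theta> W \<ge> (CZ rho \<theta> W + CS rho \<theta> W) / 2 then CR rho \<theta> W
     else CR rho \<theta> W + Sterm rho \<theta> W)"
proof -
  define sw where "sw = sqrt (w11 * w22 - w12^2)"
  define E where "E = r * e / K"
  define A where "A = (w11 * (u 2)^2 - 2 * w12 * u 1 * u 2 + w22 * (u 1)^2) / K"
  define CSv where "CSv = trace (W ** Gi)"
  have TA: "TrAbs (ofRM (W ** mk 0 (-a') a' 0)) = 2 * sw * \<bar>a'\<bar>" for a'
    using TrAbs_W[OF Wm w11p wdet] sw_def by simp
  have CSe: "CS rho \<theta> W = CSv" using CS_eq[OF A1 A2] CSv_def by simp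
  have CZe: "CZ rho \<theta> W = CSv + 2 * sw * \<bar>E\<bar>" using CZ_eq[OF A1 A2] CSv_def TA E_def by simp
  have ReG: "trace (W ** mk (r * g 2 2 / K) (-r * g 1 2 / K) (-r * g 1 2 / K) (r * g 1 1 / K)) = CSv - A"
    unfolding CSv_def A_def Wm using K_pos
    by (simp add: Gi_def trace_mk_mult field_simps power2_eq_square)
  have CRe: "CR rho \<theta> W = CSv - A + 2 * sw * \<bar>E\<bar>" using CR_eq[OF A1 A2] ReG TA E_def by simp
  have RHS: "(if CR rho \<theta> W \<ge> (CZ rho \<theta> W + CS rho \<theta> W) / 2 then CR rho \<theta> W
     else CR rho \<theta> W + Sterm rho \<theta> W) = optF CSv A (2 * sw) E"
    unfolding optF_def Sterm_def CSe CZe CRe ..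
  have hX: "hfun rho \<theta> (Xq t) W = CSv + K * (w11 * (t 1)^2 + 2 * w12 * t 1 * t 2 + w22 * (t 2)^2)
      + 2 * sw * \<bar>E - (t 1 * u 1 + t 2 * u 2)\<bar>" for t
    by (simp only: hfun_Xq[OF A1 A2 Wm] TA E_def CSv_def)
  have "CH rho \<theta> W = optF CSv A (2 * sw) E"
    unfolding CH_def
  proof (rule cInf_eq_minimum)
    obtain t1 t2 where tt: "CSv + K*(w11*t1^2 + 2*w12*t1*t2 + w22*t2^2) + 2 * sw*\<bar>E - (t1*u 1 + t2*u 2)\<bar> = optF CSv A (2 * sw) E"
      using opt_attained[OF w11p wdet K_pos sw_def A_def] by blast
    define t where "t = (\<lambda>j::2. if j = 1 then t1 else t2)"
    have "hfun rho \<theta> (Xq t) W = optF CSv A (2 * sw) E" using hX[of t] tt by (simp add: t_def)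
    then show "optF CSv A (2 * sw) E \<in> (\<lambda>X. hfun rho \<theta> X W) ` locally_unbiased rho \<theta>"
      using Xq_in[OF A1 A2, of t] by (metis image_eqI)
  next
    fix v assume "v \<in> (\<lambda>X. hfun rho \<theta> X W) ` locally_unbiased rho \<theta>"
    then obtain X where X: "X \<in> locally_unbiased rho \<theta>" "v = hfun rho \<theta> X W" by blast
    obtain t where "X = Xq t" using X_form[OF A1 A2 X(1)] by blast
    then have "v = CSv + K * (w11 * (t 1)^2 + 2 * w12 * t 1 * t 2 + w22 * (t 2)^2)
      + 2 * sw * \<bar>E - (t 1 * u 1 + t 2 * u 2)\<bar>" using X(2) hX by simp
    then show "optF CSv A (2 * sw) E \<le> v"
      using opt_lower[OF w11p wdet K_pos sw_def A_def] by simp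
  qed
  then show ?thesis using RHS by simp
qed

end

theorem theorem1:
  fixes rho :: "real^2 \<Rightarrow> complex^2^2" and \<Theta> :: "(real^2) set"
    and \<theta> :: "real^2" and W :: "real^2^2"
  assumes "open \<Theta>"
    and "\<forall>t\<in>\<Theta>. strictly_positive (rho t) \<and> trace (rho t) = 1"
    and "\<forall>t\<in>\<Theta>. rho differentiable (at t)"
    and "continuous_on \<Theta> (\<lambda>t. frechet_derivative rho (at t))"
    and "\<forall>t\<in>\<Theta>. \<forall>a b::real. a *\<^sub>R pder rho t 1 + b *\<^sub>R pder rho t 2 = 0 \<longrightarrow> a = 0 \<and> b = 0"
    and "\<theta> \<in> \<Theta>"
    and "transpose W = W"
    and "\<forall>v::real^2. v \<noteq> 0 \<longrightarrow> 0 < v \<bullet> (W *v v)"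
  shows "CH rho \<theta> W =
    (if CR rho \<theta> W \<ge> (CZ rho \<theta> W + CS rho \<theta> W) / 2 then CR rho \<theta> W
     else CR rho \<theta> W + Sterm rho \<theta> W)"
proof -
  have pos: "strictly_positive (rho \<theta>)" "trace (rho \<theta>) = 1" using assms(2,6) by auto
  have herm: "\<forall>t\<in>\<Theta>. hermitian (rho t) \<and> trace (rho t) = 1" using assms(2) strictly_positive_def by auto
  have pd: "hermitian (pder rho \<theta> i) \<and> trace (pder rho \<theta> i) = 0" for i
    using pder_props[OF assms(1) assms(6) herm] assms(3,6) by auto
  have indep: "\<And>a b::real. a *\<^sub>R pder rho \<theta> 1 + b *\<^sub>R pder rho \<theta> 2 = 0 \<Longrightarrow> a = 0 \<and> b = 0"
    using assms(5,6) by blast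
  obtain a x where rx: "rho \<theta> = B a x" using hermitian_ex_B pos(1) strictly_positive_def by blast
  have "complex_of_real (2 * a) = 1" using pos(2) rx trace_B by simp
  then have a: "a = 1/2" by (simp add: complex_eq_iff)
  define s where "s = 2 *\<^sub>R x"
  have rs: "rho \<theta> = B (1/2) ((1/2) *\<^sub>R s)" using rx a s_def by simp
  obtain b y where py: "\<forall>i. pder rho \<theta> i = B (b i) (y i)" using hermitian_choice[of "pder rho \<theta>"] pd by blast
  have b0: "b i = 0" for i
  proof -
    have "complex_of_real (2 * b i) = 0" using pd[of i] py trace_B by metis
    then show ?thesis by (simp add: complex_eq_iff)
  qed
  define d where "d i = 2 *\<^sub>R y i" for i
  have pdd: "pder rho \<theta> i = B 0 ((1/2) *\<^sub>R d i)" for i using py b0 d_def by simp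
  have ss1: "s \<bullet> s < 1"
  proof -
    have m: "rho \<theta> = mk (complex_of_real (1/2 + s$3/2)) (Complex (s$1/2) (-(s$2/2))) (cnj (Complex (s$1/2) (-(s$2/2)))) (complex_of_real (1/2 - s$3/2))"
      unfolding rs B_def by (simp add: mk_eq_iff complex_eq_iff)
    have "\<forall>v::complex^2. v \<noteq> 0 \<longrightarrow> 0 < Re (\<Sum>i\<in>UNIV. cnj (v $ i) * (rho \<theta> *v v) $ i)"
      using pos(1) strictly_positive_def by blast
    then have "(1/2 + s$3/2) * (1/2 - s$3/2) - ((Re (Complex (s$1/2) (-(s$2/2))))^2 + (Im (Complex (s$1/2) (-(s$2/2))))^2) > 0"
      unfolding m by (rule pos_det(2))
    then show ?thesis by (simp add: inner_vec_def sum_3 power2_eq_square algebra_simps)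
  qed
  have ncross: "cross3 (d 1) (d 2) \<noteq> 0"
  proof
    assume n0: "cross3 (d 1) (d 2) = 0"
    have lin: "p *\<^sub>R pder rho \<theta> 1 + q *\<^sub>R pder rho \<theta> 2 = B 0 ((1/2) *\<^sub>R (p *\<^sub>R d 1 + q *\<^sub>R d 2))" for p q
      by (simp add: pdd B_scale B_add algebra_simps)
    let ?g11 = "d 1 \<bullet> d 1" and ?g12 = "d 1 \<bullet> d 2" and ?g22 = "d 2 \<bullet> d 2"
    have Dz: "?g11 * ?g22 - ?g12^2 = 0"
      using norm_cross_dot[of "d 1" "d 2"] n0 by (simp add: power2_norm_eq_inner power_mult_distrib)
    let ?v = "?g11 *\<^sub>R d 2 - ?g12 *\<^sub>R d 1"
    have "?v \<bullet> ?v = ?g11 * (?g11 * ?g22 - ?g12^2)"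
      by (simp add: inner_diff_left inner_diff_right inner_commute power2_eq_square algebra_simps)
    then have "?v = 0" using Dz by simp
    then have z: "(- ?g12) *\<^sub>R d 1 + ?g11 *\<^sub>R d 2 = 0" by (simp add: algebra_simps)
    have "(- ?g12) *\<^sub>R pder rho \<theta> 1 + ?g11 *\<^sub>R pder rho \<theta> 2 = B 0 ((1/2) *\<^sub>R ((- ?g12) *\<^sub>R d 1 + ?g11 *\<^sub>R d 2))"
      by (rule lin)
    also have "\<dots> = 0" unfolding z by (simp add: B_zero)
    finally have "(- ?g12) *\<^sub>R pder rho \<theta> 1 + ?g11 *\<^sub>R pder rho \<theta> 2 = 0" .
    then have "?g11 = 0" using indep by blast
    then have "d 1 = 0" by simp
    then have z1: "1 *\<^sub>R d 1 + 0 *\<^sub>R d 2 = 0" by simp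
    have "1 *\<^sub>R pder rho \<theta> 1 + 0 *\<^sub>R pder rho \<theta> 2 = B 0 ((1/2) *\<^sub>R (1 *\<^sub>R d 1 + 0 *\<^sub>R d 2))"
      by (rule lin)
    also have "\<dots> = 0" unfolding z1 by (simp add: B_zero)
    finally have "1 *\<^sub>R pder rho \<theta> 1 + 0 *\<^sub>R pder rho \<theta> 2 = 0" .
    then have "(1::real) = 0 \<and> (0::real) = 0" by (rule indep)
    then show False by simp
  qed
  have Q: "qb s d" using ss1 ncross by unfold_locales
  have A1: "rho \<theta> = qb.rhoq s" by (simp add: rs qb.rhoq_def[OF Q])
  have A2: "\<forall>i. pder rho \<theta> i = qb.Dq d i" by (simp add: pdd qb.Dq_def[OF Q])
  define w11 where "w11 = W$1$1"
  define w12 where "w12 = W$1$2"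
  define w22 where "w22 = W$2$2"
  have "W$2$1 = W$1$2" using arg_cong[OF assms(7), of "\<lambda>M. M$1$2"] by (simp add: transpose_def)
  then have Wm: "W = mk w11 w12 w12 w22" unfolding w11_def w12_def w22_def by (subst mk_eta) simp
  have w11p: "w11 > 0"
  proof -
    have "(vector [1, 0] :: real^2) \<noteq> 0" by (simp add: vec_eq_iff forall_2 vector_def)
    then have "0 < vector [1, 0] \<bullet> (W *v vector [1, 0])" using assms(8) by blast
    then show ?thesis by (simp add: Wm mk_mulv inner_vec_def sum_2 vector_def)
  qed
  have wdet: "w11 * w22 - w12^2 > 0"
  proof -
    have "(vector [-w12, w11] :: real^2) \<noteq> 0" using w11p by (simp add: vec_eq_iff forall_2 vector_def)
    then have "0 < vector [-w12, w11] \<bullet> (W *v vector [-w12, w11])" using assms(8) by blast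
    then have "0 < w11 * (w11 * w22 - w12^2)"
      by (simp add: Wm mk_mulv inner_vec_def sum_2 vector_def power2_eq_square algebra_simps)
    then show ?thesis using w11p by (simp add: zero_less_mult_iff)
  qed
  show ?thesis by (rule qb.main_result[OF Q A1 A2 Wm w11p wdet])
qed

end
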